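(* Let $X,Y$ be Polish spaces, $f\colon X\to Y$ a continuous map, and let $A\subseteq X$ be the set of points of $X$ which are not locally dense for $f$. Then $f(A)$ is meager in $Y$.
   Context: For a continuous map $f\colon X\to Y$ between Polish spaces, a point $x\in X$ is locally dense for $f$ if for every neighborhood $U$ of $x$ the set $\overline{f(U)}$ is a neighborhood of $f(x)$. *)

theory Defs
  imports "HOL-Analysis.Analysis"
begin

definition nhd_of :: "'a::topological_space set \<Rightarrow> 'a \<Rightarrow> bool" where
  "nhd_of N x \<longleftrightarrow> (\<exists>V. open V \<and> x \<in> V \<and> V \<subseteq> N)"

definition locally_dense :: "('a::topological_space \<Rightarrow> 'b::topological_space) \<Rightarrow> 'a \<Rightarrow> bool" where
  "locally_dense f x \<longleftrightarrow> (\<forall>U. nhd_of U x \<longrightarrow> nhd_of (closure (f ` U)) (f x))"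

definition nowhere_dense :: "'a::topological_space set \<Rightarrow> bool" where
  "nowhere_dense S \<longleftrightarrow> interior (closure S) = {}"

definition meager :: "'a::topological_space set \<Rightarrow> bool" where
  "meager S \<longleftrightarrow> (\<exists>F :: nat \<Rightarrow> 'a set. (\<forall>n. nowhere_dense (F n)) \<and> S \<subseteq> (\<Union>n. F n))"

end

theory Submission
  imports Defs
begin

lemma nd_aux:
  fixes T :: "'b::topological_space set"
  shows "nowhere_dense (T - interior (closure T))"
proof -
  have "interior (closure (T - interior (closure T))) = {}"
  proof (rule ccontr)
    assume "interior (closure (T - interior (closure T))) \<noteq> {}"
    then obtain y where y: "y \<in> interior (closure (T - interior (closure T)))" by blast
    let ?W = "interior (closure (T - interior (closure T)))"
    have c1: "closure (T - interior (closure T)) \<subseteq> closure T"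
      by (simp add: closure_mono)
    have c2: "closure (T - interior (closure T)) \<subseteq> - interior (closure T)"
      by (rule closure_minimal) auto
    have "?W \<subseteq> closure T" using c1 interior_subset by blast
    then have "?W \<subseteq> interior (closure T)" by (simp add: interior_maximal)
    moreover have "?W \<subseteq> - interior (closure T)" using c2 interior_subset by blast
    ultimately show False using y by blast
  qed
  then show ?thesis unfolding nowhere_dense_def .
qed

theorem mainTheorem6:
  fixes f :: "'a::polish_space \<Rightarrow> 'b::polish_space"
  assumes "continuous_on UNIV f"
  shows "meager (f ` {x. \<not> locally_dense f x})"
proof -
  obtain B :: "'a set set" where cB: "countable B" and tB: "topological_basis B"
    using ex_countable_basis by blast
  have "B \<noteq> {}"
    by (rule topological_basisE[OF tB open_UNIV UNIV_I[of undefined]]) blast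
  then have rB: "range (from_nat_into B) = B" using cB by (simp add: range_from_nat_into)
  define F where "F n = f ` (from_nat_into B n) - interior (closure (f ` (from_nat_into B n)))" for n
  have "\<forall>n. nowhere_dense (F n)" unfolding F_def using nd_aux by blast
  moreover have "f ` {x. \<not> locally_dense f x} \<subseteq> (\<Union>n. F n)"
  proof
    fix z assume "z \<in> f ` {x. \<not> locally_dense f x}"
    then obtain x where z: "z = f x" and nl: "\<not> locally_dense f x" by blast
    then obtain U where U: "nhd_of U x" and nn: "\<not> nhd_of (closure (f ` U)) (f x)"
      unfolding locally_dense_def by blast
    then obtain V where V: "open V" "x \<in> V" "V \<subseteq> U" unfolding nhd_of_def by blast
    obtain b where b: "b \<in> B" "x \<in> b" "b \<subseteq> V" using topological_basisE[OF tB V(1) V(2)] by blast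
    have "b \<in> range (from_nat_into B)" using rB b(1) by simp
    then obtain n where n: "from_nat_into B n = b" by (metis imageE)
    have "f ` b \<subseteq> f ` U" using b V by blast
    then have cs: "closure (f ` b) \<subseteq> closure (f ` U)" by (rule closure_mono)
    have "f x \<notin> interior (closure (f ` b))"
    proof
      assume "f x \<in> interior (closure (f ` b))"
      moreover have "interior (closure (f ` b)) \<subseteq> closure (f ` U)"
        using interior_subset cs by (rule order_trans)
      ultimately have "nhd_of (closure (f ` U)) (f x)"
        unfolding nhd_of_def using open_interior by blast
      then show False using nn by contradiction
    qed
    then have "f x \<in> F n" unfolding F_def n using b by blast
    then show "z \<in> (\<Union>n. F n)" using z by blast
  qed
  ultimately show ?thesis unfolding meager_def by blast
qed

end
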